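(* Let $q$ be a prime power, $2\le n\le m$, and $0\ne\mathcal{C}\subseteq\mathrm{Mat}$ a rank-metric code. Then $d(\mathcal{C})=n+1-\min\{d\mid \rho_{\mathrm c}(\mathcal{C},J)=\dim(\mathcal{C})/m \text{ for all subspaces } J\subseteq\mathbb{F}_q^n\text{ with }\dim(J)=d\}=m+1-\min\{d\mid\rho_{\mathrm r}(\mathcal{C},K)=\dim(\mathcal{C})/n\text{ for all subspaces }K\subseteq\mathbb{F}_q^m\text{ with }\dim(K)=d\}$.
   Context: $\mathrm{Mat}$ is the $\mathbb{F}_q$-space of $n\times m$ matrices over $\mathbb{F}_q$; a rank-metric code is an $\mathbb{F}_q$-linear subspace, with minimum distance $d(\mathcal{C})=\min\{\mathrm{rk}(M)\mid M\in\mathcal{C},M\ne0\}$. For subspaces $J\subseteq\mathbb{F}_q^n$, $K\subseteq\mathbb{F}_q^m$: $\mathcal{C}(J,\mathrm c)=\{M\in\mathcal{C}\mid\mathrm{colsp}(M)\subseteq J\}$, $\mathcal{C}(K,\mathrm r)=\{M\in\mathcal{C}\mid\mathrm{rowsp}(M)\subseteq K\}$, $\rho_{\mathrm c}(\mathcal{C},J)=(\dim\mathcal{C}-\dim\mathcal{C}(J^\perp,\mathrm c))/m$, $\rho_{\mathrm r}(\mathcal{C},K)=(\dim\mathcal{C}-\dim\mathcal{C}(K^\perp,\mathrm r))/n$, with $\perp$ the orthogonal complement for the standard inner product. *)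

theory Defs
  imports "HOL-Analysis.Analysis"
begin

text \<open>Matrices in Mat (n x m over F_q) are elements of type 'a^'m^'n:
  n = CARD('n) rows, each row in 'a^'m; columns lie in 'a^'n.\<close>

definition mat_scale :: "'a::field \<Rightarrow> 'a^'m^'n \<Rightarrow> 'a^'m^'n" where
  "mat_scale c A = (\<chi> i j. c * A$i$j)"

interpretation matsp: vector_space "mat_scale :: 'a::field \<Rightarrow> 'a^'m^'n \<Rightarrow> 'a^'m^'n"
  by unfold_locales (simp_all add: mat_scale_def vec_eq_iff algebra_simps)

definition dotp :: "'a::field^'k \<Rightarrow> 'a^'k \<Rightarrow> 'a" where
  "dotp x y = (\<Sum>i\<in>UNIV. x$i * y$i)"

definition orth :: "('a::field^'k) set \<Rightarrow> ('a^'k) set" where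
  "orth J = {x. \<forall>y\<in>J. dotp x y = 0}"

definition colsp :: "'a::field^'m^'n \<Rightarrow> ('a^'n) set" where
  "colsp M = vec.span (columns M)"

definition rowsp :: "'a::field^'m^'n \<Rightarrow> ('a^'m) set" where
  "rowsp M = vec.span (rows M)"

definition min_dist :: "('a::field^'m^'n) set \<Rightarrow> nat" where
  "min_dist C = Min {rank M | M. M \<in> C \<and> M \<noteq> 0}"

definition subcode_c :: "('a::field^'m^'n) set \<Rightarrow> ('a^'n) set \<Rightarrow> ('a^'m^'n) set" where
  "subcode_c C J = {M \<in> C. colsp M \<subseteq> J}"

definition subcode_r :: "('a::field^'m^'n) set \<Rightarrow> ('a^'m) set \<Rightarrow> ('a^'m^'n) set" where
  "subcode_r C K = {M \<in> C. rowsp M \<subseteq> K}"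

definition rho_c :: "('a::field^'m^'n) set \<Rightarrow> ('a^'n) set \<Rightarrow> real" where
  "rho_c C J = (real (matsp.dim C) - real (matsp.dim (subcode_c C (orth J)))) / real CARD('m)"

definition rho_r :: "('a::field^'m^'n) set \<Rightarrow> ('a^'m) set \<Rightarrow> real" where
  "rho_r C K = (real (matsp.dim C) - real (matsp.dim (subcode_r C (orth K)))) / real CARD('n)"

end

theory Submission
  imports Defs
begin

lemma rank_nullity_vec:
  fixes f :: "'a::field^'k \<Rightarrow> 'a^'l"
  assumes lf: "Vector_Spaces.linear (*s) (*s) f"
  shows "vec.dim {x. f x = 0} + vec.dim (range f) = CARD('k)"
proof -
  interpret lf: Vector_Spaces.linear "(*s)" "(*s)" f by fact
  let ?N = "{x. f x = 0}"
  have subN: "vec.subspace ?N" by (rule lf.subspace_kernel)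
  obtain B where B: "B \<subseteq> ?N" "vec.independent B" "?N \<subseteq> vec.span B" "card B = vec.dim ?N"
    using vec.basis_exists[of "{x. f x = 0}"] by metis
  obtain C where C: "B \<subseteq> C" "vec.independent C" "UNIV \<subseteq> vec.span C"
    using vec.maximal_independent_subset_extend[of B UNIV] B(2) by (metis subset_UNIV)
  have fC: "finite C" using C(2) vec.finiteI_independent by blast
  have cC: "card C = CARD('k)"
    by (metis C(2,3) top.extremum_uniqueI vec.dim_span vec.dim_span_eq_card_independent vec_dim_card)
  have NB: "?N = vec.span B"
    using B(1,3) subN vec.span_minimal by blast
  define T where "T = vec.span (C - B)"
  have subT: "vec.subspace T" unfolding T_def by simp
  have dT: "vec.dim T = card (C - B)" unfolding T_def
    using C(2) vec.dim_span_eq_card_independent vec.independent_mono by blast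
  have sumU: "{x + y |x y. x \<in> ?N \<and> y \<in> T} = UNIV"
  proof -
    have "vec.span (B \<union> (C - B)) = UNIV" using C by (metis Un_Diff_cancel sup.absorb2 top.extremum_uniqueI)
    then show ?thesis unfolding vec.span_Un NB T_def by simp
  qed
  have "vec.dim {x + y |x y. x \<in> ?N \<and> y \<in> T} + vec.dim (?N \<inter> T) = vec.dim ?N + vec.dim T"
    by (rule vec.dim_sums_Int[OF subN subT])
  moreover have "card B + card (C - B) = card C"
    using fC C(1) by (metis card_Diff_subset finite_subset card_mono le_add_diff_inverse)
  ultimately have "vec.dim (?N \<inter> T) = 0"
    using sumU B(4) dT cC vec_dim_card by (metis add_left_cancel add.right_neutral)
  then have NT: "?N \<inter> T \<subseteq> {0}" by simp
  have inj: "inj_on f (vec.span T)"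
  proof (rule inj_onI)
    fix x y assume "x \<in> vec.span T" "y \<in> vec.span T" "f x = f y"
    moreover have "vec.span T = T" using subT by simp
    ultimately have "x - y \<in> ?N \<inter> T" using subT lf.diff vec.subspace_diff by (auto)
    with NT show "x = y" by auto
  qed
  have rT: "range f = f ` T"
  proof
    show "range f \<subseteq> f ` T"
    proof
      fix z assume "z \<in> range f"
      then obtain v where v: "z = f v" by auto
      have "v \<in> {x + y |x y. x \<in> ?N \<and> y \<in> T}" using sumU by simp
      then obtain a t where "v = a + t" "f a = 0" "t \<in> T" by auto
      then show "z \<in> f ` T" using v lf.add by auto
    qed
  qed auto
  have "vec.dim (f ` T) = vec.dim T"
    by (rule vec.dim_image_eq[OF lf inj])
  then show ?thesis using rT dT B(4) cC \<open>card B + card (C - B) = card C\<close> by simp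
qed


lemma dim_rows_le_columns_gen:
  fixes A :: "'a::field^'m^'n"
  shows "vec.dim (rows A) \<le> vec.dim (columns A)"
proof -
  obtain B where B: "B \<subseteq> columns A" "vec.independent B" "columns A \<subseteq> vec.span B"
      "card B = vec.dim (columns A)"
    using vec.basis_exists[of "columns A"] by metis
  have fB: "finite B" using B(2) vec.finiteI_independent by blast
  have "\<forall>j. \<exists>u. column j A = (\<Sum>v\<in>B. u v *s v)"
  proof
    fix j
    have "column j A \<in> vec.span B" using B(3) by (auto simp: columns_def)
    then show "\<exists>u. column j A = (\<Sum>v\<in>B. u v *s v)"
      using vec.span_finite[OF fB] by auto
  qed
  then obtain u where u: "\<And>j. column j A = (\<Sum>v\<in>B. u j v *s v)" by metis
  define R where "R = (\<lambda>v. (\<chi> j. u j v) :: 'a^'m)"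
  have rowi: "row i A = (\<Sum>v\<in>B. (v$i) *s R v)" for i
  proof -
    have "row i A $ j = (\<Sum>v\<in>B. (v$i) *s R v) $ j" for j
    proof -
      have "row i A $ j = column j A $ i" by (simp add: row_def column_def)
      also have "\<dots> = (\<Sum>v\<in>B. u j v * v $ i)" by (simp add: u sum_component)
      also have "\<dots> = (\<Sum>v\<in>B. (v$i) *s R v) $ j"
        by (simp add: sum_component R_def mult.commute)
      finally show ?thesis .
    qed
    then show ?thesis by (simp add: vec_eq_iff)
  qed
  have "rows A \<subseteq> vec.span (R ` B)"
  proof
    fix r assume "r \<in> rows A"
    then obtain i where r: "r = row i A" by (auto simp: rows_def)
    show "r \<in> vec.span (R ` B)" unfolding r rowi
      by (intro vec.span_sum vec.span_scale vec.span_base) auto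
  qed
  then have "vec.dim (rows A) \<le> card (R ` B)"
    using vec.dim_le_card fB by blast
  also have "\<dots> \<le> card B" using fB card_image_le by blast
  finally show ?thesis using B(4) by simp
qed

lemma rank_eq_dim_columns:
  fixes A :: "'a::field^'m^'n"
  shows "rank A = vec.dim (columns A)"
  using dim_rows_le_columns_gen[of A] dim_rows_le_columns_gen[of "transpose A"]
  unfolding row_rank_def_gen by simp

lemma rank_eq_dim_rows:
  fixes A :: "'a::field^'m^'n"
  shows "rank A = vec.dim (rows A)"
  unfolding row_rank_def_gen by simp

lemma column_eq_mult_axis:
  fixes A :: "'a::field^'m^'n"
  shows "column j A = A *v axis j 1"
  by (simp add: vec_eq_iff column_def matrix_vector_mult_def axis_def if_distrib cong: if_cong)

lemma range_mult_span_columns: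
  fixes A :: "'a::field^'m^'n"
  shows "range ((*v) A) = vec.span (columns A)"
proof
  show "range ((*v) A) \<subseteq> vec.span (columns A)"
    using matrix_vector_mult_in_columnspace_gen by blast
  have "vec.subspace (range ((*v) A))"
    by (rule vec.subspace_image) simp
  moreover have "columns A \<subseteq> range ((*v) A)"
    by (auto simp: columns_def column_eq_mult_axis)
  ultimately show "vec.span (columns A) \<subseteq> range ((*v) A)"
    using vec.span_minimal by blast
qed


lemma dotp_add_right: "dotp x (y + z) = dotp x y + dotp x z"
  by (simp add: dotp_def sum.distrib distrib_left)

lemma dotp_scale_right: "dotp x (c *s y) = c * dotp x y"
  by (simp add: dotp_def sum_distrib_left mult.left_commute)

lemma dotp_zero_right [simp]: "dotp x 0 = 0"
  by (simp add: dotp_def)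

lemma dotp_zero_left [simp]: "dotp 0 x = 0"
  by (simp add: dotp_def)

lemma dotp_commute: "dotp x y = dotp y x"
  by (simp add: dotp_def mult.commute)

lemma subspace_dotp_zero: "vec.subspace {y. dotp x y = 0}"
  unfolding vec.subspace_def by (simp add: dotp_add_right dotp_scale_right)

lemma dotp_add_left: "dotp (y + z) x = dotp y x + dotp z x"
  by (simp add: dotp_def sum.distrib distrib_right)

lemma dotp_scale_left: "dotp (c *s y) x = c * dotp y x"
  by (simp add: dotp_def sum_distrib_left mult.assoc)

lemma subspace_orth: "vec.subspace (orth J)"
  unfolding vec.subspace_def orth_def
  by (simp add: dotp_add_left dotp_scale_left)

lemma orth_span: "orth (vec.span S) = orth S"
proof
  show "orth (vec.span S) \<subseteq> orth S" unfolding orth_def using vec.span_superset by blast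
  show "orth S \<subseteq> orth (vec.span S)"
  proof
    fix x assume "x \<in> orth S"
    then have "S \<subseteq> {y. dotp x y = 0}" by (auto simp: orth_def)
    then have "vec.span S \<subseteq> {y. dotp x y = 0}" using vec.span_minimal subspace_dotp_zero by blast
    then show "x \<in> orth (vec.span S)" by (auto simp: orth_def)
  qed
qed

lemma dim_orth:
  fixes S :: "('a::field^'k) set"
  assumes sub: "vec.subspace S"
  shows "vec.dim (orth S) + vec.dim S = CARD('k)"
proof -
  obtain B where B: "B \<subseteq> S" "vec.independent B" "S \<subseteq> vec.span B" "card B = vec.dim S"
    using vec.basis_exists[of S] by metis
  have fB: "finite B" using B(2) vec.finiteI_independent by blast
  have "card B \<le> card (UNIV :: 'k set)" using B(4) dim_subset_UNIV_cart_gen[of S] by simp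
  then have "\<exists>g. g ` B \<subseteq> (UNIV :: 'k set) \<and> inj_on g B"
    using fB by (intro card_le_inj) auto
  then obtain g where g: "g ` B \<subseteq> (UNIV :: 'k set)" "inj_on g B" by blast
  define b where "b i = (if i \<in> g ` B then the_inv_into B g i else 0)" for i
  define A :: "'a^'k^'k" where "A = (\<chi> i. b i)"
  have rowA: "row i A = b i" for i by (simp add: row_def A_def vec_lambda_eta)
  have bS: "b i \<in> S" for i
    using B(1) the_inv_into_into[OF g(2)] vec.subspace_0[OF sub] by (auto simp: b_def)
  have Bb: "v \<in> B \<Longrightarrow> b (g v) = v" for v
    using the_inv_into_f_f[OF g(2)] by (auto simp: b_def)
  have rows_sub: "rows A \<subseteq> S" using bS by (auto simp: rows_def rowA)
  have B_rows: "B \<subseteq> rows A"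
  proof
    fix v assume "v \<in> B"
    then have "v = row (g v) A" using Bb rowA by simp
    then show "v \<in> rows A" by (auto simp: rows_def)
  qed
  have span_rows: "vec.span (rows A) = S"
  proof
    show "vec.span (rows A) \<subseteq> S" using rows_sub sub vec.span_minimal by blast
    show "S \<subseteq> vec.span (rows A)" using B(3) B_rows vec.span_mono by blast
  qed
  have null: "{x. A *v x = 0} = orth S"
  proof -
    have "A *v x = 0 \<longleftrightarrow> (\<forall>i. dotp x (b i) = 0)" for x
      by (simp add: vec_eq_iff matrix_vector_mult_def A_def dotp_def mult.commute)
    also have "\<dots> x \<longleftrightarrow> x \<in> orth (rows A)" for x
      by (auto simp: orth_def rows_def rowA)
    finally show ?thesis using orth_span[of "rows A"] span_rows by auto
  qed
  have "vec.dim {x. A *v x = 0} + vec.dim (range ((*v) A)) = CARD('k)"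
    by (rule rank_nullity_vec) (rule matrix_vector_mul_linear_gen)
  moreover have "vec.dim (range ((*v) A)) = vec.dim S"
    by (metis range_mult_span_columns vec.dim_span rank_eq_dim_columns rank_eq_dim_rows span_rows)
  ultimately show ?thesis using null by simp
qed


lemma matsp_dim_zero_iff:
  fixes S :: "('a::{finite,field}^'m^'n) set"
  shows "matsp.dim S = 0 \<longleftrightarrow> S \<subseteq> {0}"
proof
  assume "S \<subseteq> {0}"
  then have "S \<subseteq> matsp.span {}" by simp
  then show "matsp.dim S = 0" using matsp.dim_le_card[of S "{}"] by simp
next
  assume d: "matsp.dim S = 0"
  obtain B where B: "B \<subseteq> S" "matsp.independent B" "S \<subseteq> matsp.span B" "card B = matsp.dim S"
    using matsp.basis_exists[of S] by metis
  have "finite B" by simp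
  then have "B = {}" using B(4) d by simp
  then show "S \<subseteq> {0}" using B(3) by simp
qed

lemma rank_pos:
  fixes M :: "'a::field^'m^'n"
  assumes "M \<noteq> 0"
  shows "rank M \<ge> 1"
proof (rule ccontr)
  assume "\<not> rank M \<ge> 1"
  then have "vec.dim (rows M) = 0" using rank_eq_dim_rows[of M] by linarith
  then have "rows M \<subseteq> {0}" using vec.dim_eq_0 by blast
  then have "row i M = 0" for i by (auto simp: rows_def)
  then have "M = 0" by (simp add: row_def vec_eq_iff)
  with assms show False by simp
qed

lemma gen:
  fixes C :: "('a::{finite,field}^'m^'n) set" and sp :: "'a^'m^'n \<Rightarrow> ('a^'k) set"
    and N :: real
  assumes subC: "matsp.subspace C" and nz: "C \<noteq> {0}"
    and sps: "\<And>M. vec.subspace (sp M)" and spd: "\<And>M. vec.dim (sp M) = rank M"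
    and N: "N > 0"
  shows "min_dist C \<le> CARD('k) \<and> (LEAST d. \<forall>J::('a^'k) set. vec.subspace J \<and> vec.dim J = d \<longrightarrow>
     (real (matsp.dim C) - real (matsp.dim {M \<in> C. sp M \<subseteq> orth J})) / N = real (matsp.dim C) / N)
     = CARD('k) + 1 - min_dist C"
proof -
  let ?k = "CARD('k)"
  let ?R = "{rank M | M. M \<in> C \<and> M \<noteq> 0}"
  have 0: "0 \<in> C" using subC matsp.subspace_0 by blast
  then obtain M1 where M1: "M1 \<in> C" "M1 \<noteq> 0" using nz by blast
  have rk: "rank M \<le> ?k" for M :: "'a^'m^'n" using spd[of M] dim_subset_UNIV_cart_gen[of "sp M"] by simp
  have fR: "finite ?R" by (rule finite_subset[of _ "{..?k}"]) (auto simp: rk)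
  have neR: "?R \<noteq> {}" using M1 by blast
  define dC where "dC = min_dist C"
  have "dC \<in> ?R" unfolding dC_def min_dist_def using Min_in[OF fR neR] .
  then obtain M0 where M0: "M0 \<in> C" "M0 \<noteq> 0" "rank M0 = dC" by blast
  have minle: "M \<in> C \<Longrightarrow> M \<noteq> 0 \<Longrightarrow> dC \<le> rank M" for M
    unfolding dC_def min_dist_def using Min_le[OF fR] by blast
  have dC1: "dC \<ge> 1" using rank_pos[OF M0(2)] M0(3) by simp
  have dCk: "dC \<le> ?k" using rk[of M0] M0(3) by simp
  let ?P = "\<lambda>d. \<forall>J::('a^'k) set. vec.subspace J \<and> vec.dim J = d \<longrightarrow>
     (real (matsp.dim C) - real (matsp.dim {M \<in> C. sp M \<subseteq> orth J})) / N = real (matsp.dim C) / N"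
  have eqv: "((real (matsp.dim C) - real (matsp.dim {M \<in> C. sp M \<subseteq> orth J})) / N = real (matsp.dim C) / N)
      \<longleftrightarrow> {M \<in> C. sp M \<subseteq> orth J} \<subseteq> {0}" for J
  proof -
    have "((real (matsp.dim C) - real (matsp.dim {M \<in> C. sp M \<subseteq> orth J})) / N = real (matsp.dim C) / N)
       \<longleftrightarrow> matsp.dim {M \<in> C. sp M \<subseteq> orth J} = 0"
      using N by (simp add: divide_cancel_right)
    then show ?thesis using matsp_dim_zero_iff[of "{M \<in> C. sp M \<subseteq> orth J}"] by simp
  qed
  have P1: "?P (?k + 1 - dC)"
  proof (intro allI impI)
    fix J :: "('a^'k) set" assume J: "vec.subspace J \<and> vec.dim J = ?k + 1 - dC"
    have dO: "vec.dim (orth J) = dC - 1" using dim_orth[of J] J dC1 dCk by simp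
    have "{M \<in> C. sp M \<subseteq> orth J} \<subseteq> {0}"
    proof
      fix M assume M: "M \<in> {M \<in> C. sp M \<subseteq> orth J}"
      show "M \<in> {0}"
      proof (rule ccontr)
        assume "M \<notin> {0}"
        then have "dC \<le> rank M" using minle M by auto
        moreover have "rank M \<le> dC - 1" using vec.dim_subset[of "sp M" "orth J"] M spd[of M] dO by auto
        ultimately show False using dC1 by simp
      qed
    qed
    then show "(real (matsp.dim C) - real (matsp.dim {M \<in> C. sp M \<subseteq> orth J})) / N = real (matsp.dim C) / N"
      using eqv by blast
  qed
  have P2: "?k + 1 - dC \<le> d" if Pd: "?P d" for d
  proof (rule ccontr)
    assume "\<not> ?k + 1 - dC \<le> d"
    then have dle: "d + dC \<le> ?k" by simp
    let ?W = "sp M0"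
    have dW: "vec.dim (orth ?W) = ?k - dC" using dim_orth[OF sps[of M0]] spd[of M0] M0(3) by simp
    obtain B where B: "B \<subseteq> orth ?W" "vec.independent B" "orth ?W \<subseteq> vec.span B" "card B = vec.dim (orth ?W)"
      using vec.basis_exists[of "orth ?W"] by metis
    have fB: "finite B" using B(2) vec.finiteI_independent by blast
    obtain B' where B': "B' \<subseteq> B" "card B' = d"
      using obtain_subset_with_card_n[of d B] dle dW B(4) by (metis le_diff_conv2 dCk add.commute)
    define J where "J = vec.span B'"
    have subJ: "vec.subspace J" unfolding J_def by simp
    have dJ: "vec.dim J = d" unfolding J_def
      using vec.dim_span_eq_card_independent[OF vec.independent_mono[OF B(2) B'(1)]] B'(2) by simp
    have JO: "J \<subseteq> orth ?W" unfolding J_def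
      using vec.span_minimal[OF _ subspace_orth] B'(1) B(1) by blast
    have "?W \<subseteq> orth J"
    proof
      fix x assume "x \<in> ?W"
      then show "x \<in> orth J" using JO by (auto simp: orth_def dotp_commute)
    qed
    then have "M0 \<in> {M \<in> C. sp M \<subseteq> orth J}" using M0 by simp
    moreover have "{M \<in> C. sp M \<subseteq> orth J} \<subseteq> {0}" using Pd subJ dJ eqv by blast
    ultimately show False using M0(2) by blast
  qed
  have "(LEAST d. ?P d) = ?k + 1 - dC"
    by (rule Least_equality) (use P1 P2 in auto)
  then show ?thesis using dCk unfolding dC_def by simp
qed

theorem corollary5p3:
  fixes C :: "('a::{finite,field}^'m^'n) set"
  assumes "2 \<le> CARD('n)" and "CARD('n) \<le> CARD('m)"
    and "matsp.subspace C" and "C \<noteq> {0}"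
  shows "int (min_dist C) = int CARD('n) + 1 -
           int (LEAST d. \<forall>J::('a^'n) set. vec.subspace J \<and> vec.dim J = d \<longrightarrow>
                  rho_c C J = real (matsp.dim C) / real CARD('m))
       \<and> int (min_dist C) = int CARD('m) + 1 -
           int (LEAST d. \<forall>K::('a^'m) set. vec.subspace K \<and> vec.dim K = d \<longrightarrow>
                  rho_r C K = real (matsp.dim C) / real CARD('n))"
proof -
  have c: "min_dist C \<le> CARD('n) \<and> (LEAST d. \<forall>J::('a^'n) set. vec.subspace J \<and> vec.dim J = d \<longrightarrow>
     (real (matsp.dim C) - real (matsp.dim {M \<in> C. colsp M \<subseteq> orth J})) / real CARD('m) = real (matsp.dim C) / real CARD('m))
     = CARD('n) + 1 - min_dist C"
    by (rule gen[OF assms(3,4)]) (auto simp: colsp_def rank_eq_dim_columns)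
  have r: "min_dist C \<le> CARD('m) \<and> (LEAST d. \<forall>J::('a^'m) set. vec.subspace J \<and> vec.dim J = d \<longrightarrow>
     (real (matsp.dim C) - real (matsp.dim {M \<in> C. rowsp M \<subseteq> orth J})) / real CARD('n) = real (matsp.dim C) / real CARD('n))
     = CARD('m) + 1 - min_dist C"
    by (rule gen[OF assms(3,4)]) (auto simp: rowsp_def rank_eq_dim_rows)
  show ?thesis
    unfolding rho_c_def rho_r_def subcode_c_def subcode_r_def
    using c r by (simp add: of_nat_diff)
qed

end
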